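(* Let $X_{1j},\dots,X_{nj}$ be i.i.d. copies of $X_j$, let $\mathbb P_n\pi(X_j)\pi(X_j)^T=n^{-1}\sum_{i=1}^n\pi(X_{ij})\pi(X_{ij})^T$ and $D_j=\mathbb P_n\pi(X_j)\pi(X_j)^T-E\,\pi(X_j)\pi(X_j)^T$. Suppose there are positive constants $b_2,b_3$ such that $\lambda_{\max}(E\,\pi(X_j)\pi(X_j)^T)\le b_2N^{-1}$ for all $j$ and $E(B_m^2(X_{ij}))\le b_3N^{-1}$ for all $1\le m\le N$, $i$, $j$. Then: (1) there exists a positive constant $c_4$ such that for all $n$ sufficiently large $$P\big(\lambda_{\max}(\mathbb P_n\pi(X_j)\pi(X_j)^T)\ge(b_2+1)N^{-1}\big)\le2N^2\exp(-c_4nN^{-3});$$ (2) for any $c_5>0$ there exists a positive constant $c_6$ such that for all $n$ sufficiently large $$P\big(\max(|\lambda_{\max}(D_j)|,|\lambda_{\min}(D_j)|)\ge c_5N^{-1}n^{-\tau}\big)\le2N^2\exp(-c_6N^{-3}n^{1-2\tau}).$$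
   Context: $X_j$ is a random variable with values in $[0,1]$. $\pi(t)=(B_1(t),\dots,B_N(t))^T$ is the vector of $N=k+l$ normalized $B$-spline basis functions of order $l+1$ with knots $0=s_0<\dots<s_k=1$, with $\sup_t|B_m(t)|\le1$; $N$ may depend on $n$. $\tau\ge0$ is a fixed constant. $\lambda_{\max}$ and $\lambda_{\min}$ denote largest and smallest eigenvalues. *)

theory Defs
  imports "HOL-Probability.Probability" "Jordan_Normal_Form.Char_Poly"
begin

(* Extended knot vector for B-splines of order l+1 with knots 0 = s_0 < ... < s_k = 1:
   t_0 = ... = t_l = 0,  t_{l+i} = s_i (0 <= i <= k),  t_{k+l} = ... = t_{k+2l} = 1. *)
definition ext_knot :: "nat \<Rightarrow> nat \<Rightarrow> (nat \<Rightarrow> real) \<Rightarrow> nat \<Rightarrow> real" where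
  "ext_knot l k s i = (if i \<le> l then 0 else if i \<le> l + k then s (i - l) else 1)"

(* Normalized B-splines via the Cox--de Boor recursion (0/0 = 0 convention);
   bspl t r i = B_{i,r}, the i-th B-spline of order r for knot vector t.
   Order-1 splines are indicators of [t_i, t_{i+1}), with the last nonempty
   interval closed at the right end point 1 of the domain [0,1]. *)
fun bspl :: "(nat \<Rightarrow> real) \<Rightarrow> nat \<Rightarrow> nat \<Rightarrow> real \<Rightarrow> real" where
  "bspl t 0 i x = 0"
| "bspl t (Suc 0) i x =
     (if (t i \<le> x \<and> x < t (Suc i)) \<or> (x = 1 \<and> t i < 1 \<and> t (Suc i) = 1) then 1 else 0)"
| "bspl t (Suc (Suc r)) i x =
     (x - t i) / (t (i + Suc r) - t i) * bspl t (Suc r) i x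
   + (t (i + Suc (Suc r)) - x) / (t (i + Suc (Suc r)) - t (Suc i)) * bspl t (Suc r) (Suc i) x"

(* B_m(x), m = 0..N-1, N = k + l: normalized B-spline basis of order l+1 *)
definition Bspline :: "nat \<Rightarrow> nat \<Rightarrow> (nat \<Rightarrow> real) \<Rightarrow> nat \<Rightarrow> real \<Rightarrow> real" where
  "Bspline l k s m x = bspl (ext_knot l k s) (Suc l) m x"

definition lam_max :: "real mat \<Rightarrow> real" where
  "lam_max A = Max {e. eigenvalue A e}"

definition lam_min :: "real mat \<Rightarrow> real" where
  "lam_min A = Min {e. eigenvalue A e}"

end

theory Submission
  imports Defs
begin

lemma compact_box:
  fixes d :: nat
  defines "K \<equiv> (\<lambda>i::nat. if i < d then {-1..1::real} else {0})"
  shows "compact (Pi\<^sub>E UNIV K)"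
proof -
  have "compactin (product_topology (\<lambda>i. euclidean) UNIV) (Pi\<^sub>E UNIV K)"
    by (subst compactin_PiE) (auto simp: K_def)
  thus ?thesis by (simp add: euclidean_product_topology)
qed

lemma quad_max:
  fixes A :: "nat \<Rightarrow> nat \<Rightarrow> real" and d :: nat
  assumes "d > 0"
  shows "\<exists>x. (\<forall>i\<ge>d. x i = 0) \<and> (\<Sum>i<d. (x i)\<^sup>2) = 1 \<and>
     (\<forall>y. (\<forall>i\<ge>d. y i = 0) \<and> (\<Sum>i<d. (y i)\<^sup>2) = 1 \<longrightarrow>
        (\<Sum>i<d. \<Sum>j<d. A i j * y i * y j) \<le> (\<Sum>i<d. \<Sum>j<d. A i j * x i * x j))"
proof -
  define K where "K \<equiv> (\<lambda>i::nat. if i < d then {-1..1::real} else {0})"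
  define S where "S = Pi\<^sub>E UNIV K \<inter> {x. (\<Sum>i<d. (x i)\<^sup>2) = 1}"
  have "compact (Pi\<^sub>E UNIV K)" unfolding K_def by (rule compact_box)
  moreover have "closed {x::nat\<Rightarrow>real. (\<Sum>i<d. (x i)\<^sup>2) = 1}"
    by (intro closed_Collect_eq continuous_intros continuous_on_product_then_coordinatewise continuous_on_id)
  ultimately have cS: "compact S" unfolding S_def by blast
  define e0 :: "nat \<Rightarrow> real" where "e0 = (\<lambda>i. if i = 0 then 1 else 0)"
  have "(\<Sum>i<d. (e0 i)\<^sup>2) = (\<Sum>i<d. if i = 0 then 1 else 0)"
    by (intro sum.cong) (auto simp: e0_def)
  also have "\<dots> = 1" using assms by (simp add: sum.delta)
  finally have "e0 \<in> S" using assms by (auto simp: S_def K_def e0_def PiE_iff)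
  hence ne: "S \<noteq> {}" by auto
  have ct: "continuous_on S (\<lambda>x. \<Sum>i<d. \<Sum>j<d. A i j * x i * x j)"
    by (intro continuous_intros continuous_on_product_then_coordinatewise continuous_on_id)
  obtain x where x: "x \<in> S" "\<And>y. y \<in> S \<Longrightarrow> (\<Sum>i<d. \<Sum>j<d. A i j * y i * y j) \<le> (\<Sum>i<d. \<Sum>j<d. A i j * x i * x j)"
    using continuous_attains_sup[OF cS ne ct] by blast
  have inS: "y \<in> S" if "\<forall>i\<ge>d. y i = 0" "(\<Sum>i<d. (y i)\<^sup>2) = 1" for y
  proof -
    have "\<bar>y i\<bar> \<le> 1" if "i < d" for i
    proof -
      have "(y i)\<^sup>2 \<le> (\<Sum>i<d. (y i)\<^sup>2)" using that by (intro member_le_sum) auto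
      hence "(y i)\<^sup>2 \<le> 1\<^sup>2" using \<open>(\<Sum>i<d. (y i)\<^sup>2) = 1\<close> by simp
      thus ?thesis by (metis abs_le_square_iff abs_one)
    qed
    thus ?thesis using that by (auto simp: S_def K_def PiE_iff abs_le_iff)
  qed
  show ?thesis
    apply (rule exI[of _ x])
    using x inS apply (auto simp: S_def K_def PiE_iff)
    by (metis empty_iff insert_iff not_le)
qed

lemma lin_quad:
  fixes a b :: real
  assumes "\<And>t. a * t + b * t\<^sup>2 \<le> 0"
  shows "a = 0"
proof -
  define c where "c = \<bar>b\<bar> + 1"
  define t where "t = a / c"
  have pos: "\<bar>b\<bar> + 1 > 0" by simp
  have cpos: "c > 0" unfolding c_def by simp
  have "a * t + b * t\<^sup>2 = a\<^sup>2 * (c + b) / c\<^sup>2"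
    using cpos by (simp add: t_def field_simps power2_eq_square)
  hence "a * t + b * t\<^sup>2 = a\<^sup>2 * (\<bar>b\<bar> + 1 + b) / (\<bar>b\<bar> + 1)\<^sup>2" by (simp add: c_def)
  moreover have "\<bar>b\<bar> + 1 + b \<ge> 1" by linarith
  ultimately have "a\<^sup>2 * (\<bar>b\<bar> + 1 + b) / (\<bar>b\<bar> + 1)\<^sup>2 \<le> 0" using assms[of t] by simp
  hence "a\<^sup>2 * (\<bar>b\<bar> + 1 + b) \<le> 0" using pos
    by (simp add: divide_le_0_iff)
  moreover have "a\<^sup>2 * (\<bar>b\<bar> + 1 + b) \<ge> a\<^sup>2" using \<open>\<bar>b\<bar> + 1 + b \<ge> 1\<close>
    by (metis mult.right_neutral mult_left_mono zero_le_power2)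
  ultimately have "a\<^sup>2 \<le> 0" by linarith
  thus ?thesis by simp
qed

lemma quad_shift:
  fixes A :: "nat \<Rightarrow> nat \<Rightarrow> real"
  assumes "k < d" and sym: "\<And>i j. i < d \<Longrightarrow> j < d \<Longrightarrow> A i j = A j i"
  shows "(\<Sum>i<d. \<Sum>j<d. A i j * (x i + t * (if i = k then 1 else 0)) * (x j + t * (if j = k then 1 else 0)))
    = (\<Sum>i<d. \<Sum>j<d. A i j * x i * x j) + 2 * t * (\<Sum>j<d. A k j * x j) + t\<^sup>2 * A k k"
proof -
  have e: "A i j * (x i + t * (if i = k then 1 else 0)) * (x j + t * (if j = k then 1 else 0))
     = A i j * x i * x j + t * (if j = k then A i j * x i else 0) + t * (if i = k then A i j * x j else 0)
       + t\<^sup>2 * (if i = k then (if j = k then A i j else 0) else 0)" for i j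
    by (auto simp: algebra_simps power2_eq_square)
  have s2: "(\<Sum>i<d. A i k * x i) = (\<Sum>j<d. A k j * x j)"
    using sym \<open>k < d\<close> by (intro sum.cong) auto
  have p1: "(\<Sum>i<d. \<Sum>j<d. if i = k then A i j * x j else 0) = (\<Sum>j<d. A k j * x j)"
    using \<open>k < d\<close> by (subst sum.swap) (simp add: sum.delta)
  have p2: "(\<Sum>i<d. \<Sum>j<d. if i = k then if j = k then A i j else 0 else 0) = A k k"
    using \<open>k < d\<close> by (subst sum.swap) (simp add: sum.delta)
  have p0: "(\<Sum>i<d. \<Sum>j<d. if j = k then A i j * x i else 0) = (\<Sum>j<d. A k j * x j)"
    using \<open>k < d\<close> s2 by (simp add: sum.delta)
  show ?thesis
    unfolding e
    by (simp only: sum.distrib sum_distrib_left[symmetric] p0 p1 p2)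
qed

lemma quad_homog:
  fixes A :: "nat \<Rightarrow> nat \<Rightarrow> real"
  shows "(\<Sum>i<d. \<Sum>j<d. A i j * (c * y i) * (c * y j)) = c\<^sup>2 * (\<Sum>i<d. \<Sum>j<d. A i j * y i * y j)"
  by (simp add: sum_distrib_left algebra_simps power2_eq_square)

lemma quad_eig:
  fixes A :: "nat \<Rightarrow> nat \<Rightarrow> real" and d :: nat
  assumes "d > 0" and sym: "\<And>i j. i < d \<Longrightarrow> j < d \<Longrightarrow> A i j = A j i"
  shows "\<exists>\<mu> x. (\<forall>i\<ge>d. x i = 0) \<and> (\<Sum>i<d. (x i)\<^sup>2) = 1 \<and>
     (\<forall>k<d. (\<Sum>j<d. A k j * x j) = \<mu> * x k) \<and>
     (\<forall>y. (\<Sum>i<d. \<Sum>j<d. A i j * y i * y j) \<le> \<mu> * (\<Sum>i<d. (y i)\<^sup>2))"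
proof -
  let ?Q = "\<lambda>y. (\<Sum>i<d. \<Sum>j<d. A i j * y i * y j)"
  obtain x where x0: "\<forall>i\<ge>d. x i = 0" and x1: "(\<Sum>i<d. (x i)\<^sup>2) = 1"
    and xmax: "\<And>y. (\<forall>i\<ge>d. y i = 0) \<Longrightarrow> (\<Sum>i<d. (y i)\<^sup>2) = 1 \<Longrightarrow> ?Q y \<le> ?Q x"
    using quad_max[OF \<open>d > 0\<close>, of A] by blast
  define \<mu> where "\<mu> = ?Q x"
  have bound: "?Q y \<le> \<mu> * (\<Sum>i<d. (y i)\<^sup>2)" for y
  proof (cases "(\<Sum>i<d. (y i)\<^sup>2) = 0")
    case True
    hence "\<forall>i<d. y i = 0" by (simp add: sum_nonneg_eq_0_iff)
    thus ?thesis by simp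
  next
    case False
    define s where "s = (\<Sum>i<d. (y i)\<^sup>2)"
    have sp: "s > 0" using False unfolding s_def by (metis sum_nonneg zero_le_power2 order_neq_le_trans)
    define c where "c = 1 / sqrt s"
    define y' where "y' = (\<lambda>i. if i < d then c * y i else 0)"
    have c2: "c\<^sup>2 = 1 / s" using sp by (simp add: c_def power_divide)
    have "(\<Sum>i<d. (y' i)\<^sup>2) = (\<Sum>i<d. c\<^sup>2 * (y i)\<^sup>2)"
      by (intro sum.cong) (auto simp: y'_def power_mult_distrib)
    also have "\<dots> = 1" using sp by (simp add: sum_distrib_left[symmetric] c2 s_def[symmetric] sum_divide_distrib[symmetric])
    finally have "?Q y' \<le> \<mu>" unfolding \<mu>_def by (intro xmax) (auto simp: y'_def)
    moreover have "?Q y' = c\<^sup>2 * ?Q y"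
      unfolding quad_homog[symmetric] by (intro sum.cong refl) (auto simp: y'_def)
    ultimately have "?Q y / s \<le> \<mu>" using c2 by simp
    thus ?thesis using sp unfolding s_def[symmetric] by (simp add: divide_le_eq mult.commute)
  qed
  have eig: "(\<Sum>j<d. A k j * x j) = \<mu> * x k" if k: "k < d" for k
  proof -
    have "2 * ((\<Sum>j<d. A k j * x j) - \<mu> * x k) * t + (A k k - \<mu>) * t\<^sup>2 \<le> 0" for t
    proof -
      let ?y = "\<lambda>i. x i + t * (if i = k then 1 else 0)"
      have "?Q ?y \<le> \<mu> * (\<Sum>i<d. (?y i)\<^sup>2)" by (rule bound)
      moreover have "?Q ?y = \<mu> + 2 * t * (\<Sum>j<d. A k j * x j) + t\<^sup>2 * A k k"
        unfolding \<mu>_def by (rule quad_shift[OF k sym])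
      moreover have "(\<Sum>i<d. (?y i)\<^sup>2) = (\<Sum>i<d. (x i)\<^sup>2 + (if i = k then 2 * t * x i + t\<^sup>2 else 0))"
        by (intro sum.cong) (auto simp: power2_eq_square algebra_simps)
      moreover have "\<dots> = 1 + 2 * t * x k + t\<^sup>2"
        using k x1 by (simp add: sum.distrib sum.delta)
      ultimately show ?thesis by (simp add: algebra_simps)
    qed
    hence "2 * ((\<Sum>j<d. A k j * x j) - \<mu> * x k) = 0" by (rule lin_quad)
    thus ?thesis by simp
  qed
  show ?thesis using x0 x1 eig bound by blast
qed

definition quadf :: "(nat \<Rightarrow> nat \<Rightarrow> real) \<Rightarrow> nat \<Rightarrow> (nat \<Rightarrow> real) \<Rightarrow> real" where
  "quadf A d y = (\<Sum>i<d. \<Sum>j<d. A i j * y i * y j)"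

lemma vec_quad:
  fixes A :: "real mat"
  assumes A: "A \<in> carrier_mat d d" and v: "v \<in> carrier_vec d"
  shows "v \<bullet> (A *\<^sub>v v) = quadf (\<lambda>i j. A $$ (i, j)) d (\<lambda>i. v $ i)"
proof -
  have "v \<bullet> (A *\<^sub>v v) = (\<Sum>i<d. v $ i * (\<Sum>j<d. A $$ (i, j) * v $ j))"
    using A v by (auto simp: scalar_prod_def lessThan_atLeast0 intro!: sum.cong)
  also have "\<dots> = quadf (\<lambda>i j. A $$ (i, j)) d (\<lambda>i. v $ i)"
    unfolding quadf_def by (simp add: sum_distrib_left algebra_simps)
  finally show ?thesis .
qed

lemma vec_sq:
  fixes v :: "real vec"
  assumes v: "v \<in> carrier_vec d"
  shows "v \<bullet> v = (\<Sum>i<d. (v $ i)\<^sup>2)"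
  using v by (auto simp: scalar_prod_def lessThan_atLeast0 power2_eq_square)

lemma finite_eigenvalues:
  fixes A :: "real mat"
  assumes A: "A \<in> carrier_mat d d"
  shows "finite {e. eigenvalue A e}"
proof -
  have "char_poly A \<noteq> 0" using degree_monic_char_poly[OF A] by auto
  hence "finite {k. poly (char_poly A) k = 0}" by (rule poly_roots_finite)
  thus ?thesis using eigenvalue_root_char_poly[OF A] by simp
qed

lemma sym_mat_eig:
  fixes A :: "real mat"
  assumes A: "A \<in> carrier_mat d d" and d: "d > 0"
    and sym: "\<And>i j. i < d \<Longrightarrow> j < d \<Longrightarrow> A $$ (i, j) = A $$ (j, i)"
  shows "\<exists>\<mu>. eigenvalue A \<mu> \<and> (\<forall>v \<in> carrier_vec d. v \<bullet> (A *\<^sub>v v) \<le> \<mu> * (v \<bullet> v))"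
proof -
  obtain \<mu> x where x0: "\<forall>i\<ge>d. x i = 0" and x1: "(\<Sum>i<d. (x i)\<^sup>2) = 1"
    and ev: "\<forall>k<d. (\<Sum>j<d. A $$ (k, j) * x j) = \<mu> * x k"
    and bd: "\<forall>y. quadf (\<lambda>i j. A $$ (i, j)) d y \<le> \<mu> * (\<Sum>i<d. (y i)\<^sup>2)"
    using quad_eig[OF d, of "\<lambda>i j. A $$ (i, j)"] sym unfolding quadf_def by blast
  define v where "v = vec d x"
  have vc: "v \<in> carrier_vec d" by (simp add: v_def)
  have vnz: "v \<noteq> 0\<^sub>v d"
  proof
    assume "v = 0\<^sub>v d"
    hence "\<forall>i<d. x i = 0" unfolding v_def by (metis index_vec index_zero_vec(1))
    hence "(\<Sum>i<d. (x i)\<^sup>2) = 0" by simp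
    with x1 show False by simp
  qed
  have "A *\<^sub>v v = \<mu> \<cdot>\<^sub>v v"
  proof (rule eq_vecI)
    fix k assume "k < dim_vec (\<mu> \<cdot>\<^sub>v v)"
    hence k: "k < d" by (simp add: v_def)
    have "(A *\<^sub>v v) $ k = (\<Sum>j<d. A $$ (k, j) * x j)"
      using A k by (auto simp: v_def scalar_prod_def lessThan_atLeast0 intro!: sum.cong)
    also have "\<dots> = (\<mu> \<cdot>\<^sub>v v) $ k" using ev k by (simp add: v_def)
    finally show "(A *\<^sub>v v) $ k = (\<mu> \<cdot>\<^sub>v v) $ k" .
  qed (use A in \<open>simp add: v_def\<close>)
  hence "eigenvalue A \<mu>" unfolding eigenvalue_def eigenvector_def using A vc vnz by auto
  moreover have "\<forall>w \<in> carrier_vec d. w \<bullet> (A *\<^sub>v w) \<le> \<mu> * (w \<bullet> w)"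
    using bd vec_quad[OF A] vec_sq by simp
  ultimately show ?thesis by blast
qed

lemma eig_quad:
  fixes A :: "real mat"
  assumes A: "A \<in> carrier_mat d d" and "eigenvalue A e"
  shows "\<exists>v \<in> carrier_vec d. v \<noteq> 0\<^sub>v d \<and> v \<bullet> (A *\<^sub>v v) = e * (v \<bullet> v)"
  using assms unfolding eigenvalue_def eigenvector_def by auto

lemma sym_lam_max:
  fixes A :: "real mat"
  assumes A: "A \<in> carrier_mat d d" and d: "d > 0"
    and sym: "\<And>i j. i < d \<Longrightarrow> j < d \<Longrightarrow> A $$ (i, j) = A $$ (j, i)"
  shows "eigenvalue A (lam_max A)" "eigenvalue A (lam_min A)"
    "\<And>v. v \<in> carrier_vec d \<Longrightarrow> v \<bullet> (A *\<^sub>v v) \<le> lam_max A * (v \<bullet> v)"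
proof -
  obtain \<mu> where mu: "eigenvalue A \<mu>" "\<forall>v \<in> carrier_vec d. v \<bullet> (A *\<^sub>v v) \<le> \<mu> * (v \<bullet> v)"
    using sym_mat_eig[OF A d sym] by blast
  have fin: "finite {e. eigenvalue A e}" by (rule finite_eigenvalues[OF A])
  have ne: "{e. eigenvalue A e} \<noteq> {}" using mu by auto
  show "eigenvalue A (lam_max A)" unfolding lam_max_def using Max_in[OF fin ne] by simp
  show "eigenvalue A (lam_min A)" unfolding lam_min_def using Min_in[OF fin ne] by simp
  have le: "\<mu> \<le> lam_max A" unfolding lam_max_def using fin mu by (intro Max_ge) auto
  fix v :: "real vec" assume v: "v \<in> carrier_vec d"
  have "v \<bullet> v \<ge> 0" using vec_sq[OF v] by (simp add: sum_nonneg)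
  hence "\<mu> * (v \<bullet> v) \<le> lam_max A * (v \<bullet> v)" using le by (intro mult_right_mono)
  thus "v \<bullet> (A *\<^sub>v v) \<le> lam_max A * (v \<bullet> v)" using mu(2) v by (meson order_trans)
qed

lemma amgm2:
  fixes x y :: real
  shows "x * y \<le> (x\<^sup>2 + y\<^sup>2) / 2"
proof -
  have "0 \<le> (x - y)\<^sup>2" by simp
  thus ?thesis by (simp add: power2_eq_square algebra_simps)
qed

lemma sum_sq_bound:
  fixes a :: "nat \<Rightarrow> real"
  shows "(\<Sum>i<d. a i)\<^sup>2 \<le> real d * (\<Sum>i<d. (a i)\<^sup>2)"
proof -
  have "(\<Sum>i<d. a i)\<^sup>2 = (\<Sum>i<d. \<Sum>j<d. a i * a j)"
    by (simp add: power2_eq_square sum_product)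
  also have "\<dots> \<le> (\<Sum>i<d. \<Sum>j<d. ((a i)\<^sup>2 + (a j)\<^sup>2) / 2)"
    by (intro sum_mono) (rule amgm2)
  also have "\<dots> = real d * (\<Sum>i<d. (a i)\<^sup>2)"
    by (simp add: sum.distrib add_divide_distrib sum_divide_distrib[symmetric] sum_distrib_left[symmetric])
  finally show ?thesis .
qed

lemma quad_abs_bound:
  fixes B :: "nat \<Rightarrow> nat \<Rightarrow> real"
  assumes "\<And>i j. i < d \<Longrightarrow> j < d \<Longrightarrow> \<bar>B i j\<bar> \<le> m"
  shows "\<bar>quadf B d y\<bar> \<le> real d * m * (\<Sum>i<d. (y i)\<^sup>2)"
proof -
  have m0: "d > 0 \<Longrightarrow> m \<ge> 0" using assms[of 0 0] by auto
  have "\<bar>quadf B d y\<bar> \<le> (\<Sum>i<d. \<Sum>j<d. \<bar>B i j * y i * y j\<bar>)"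
    unfolding quadf_def by (rule order_trans[OF sum_abs]) (intro sum_mono sum_abs)
  also have "\<dots> \<le> (\<Sum>i<d. \<Sum>j<d. m * (\<bar>y i\<bar> * \<bar>y j\<bar>))"
    by (intro sum_mono) (simp add: abs_mult mult.assoc mult_right_mono assms)
  also have "\<dots> = m * (\<Sum>i<d. \<bar>y i\<bar>)\<^sup>2"
    by (simp add: power2_eq_square sum_product sum_distrib_left sum_distrib_right mult.commute mult.left_commute)
  also have "\<dots> \<le> m * (real d * (\<Sum>i<d. (\<bar>y i\<bar>)\<^sup>2))"
    using sum_sq_bound[of "\<lambda>i. \<bar>y i\<bar>" d] m0 by (cases "d = 0") (auto intro: mult_left_mono)
  finally show ?thesis by (simp add: algebra_simps)
qed

lemma quadf_diff:
  "quadf (\<lambda>i j. P i j - E i j) d y = quadf P d y - quadf E d y"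
  unfolding quadf_def by (simp add: algebra_simps sum_subtractf)

lemma vec_sq_pos:
  fixes v :: "real vec"
  assumes v: "v \<in> carrier_vec d" and nz: "v \<noteq> 0\<^sub>v d"
  shows "v \<bullet> v > 0"
proof -
  have "\<exists>i<d. v $ i \<noteq> 0"
  proof (rule ccontr)
    assume "\<not> (\<exists>i<d. v $ i \<noteq> 0)"
    hence "v = 0\<^sub>v d" using v by (intro eq_vecI) auto
    with nz show False by simp
  qed
  then obtain i where i: "i < d" "v $ i \<noteq> 0" by blast
  have "0 < (v $ i)\<^sup>2" using i by simp
  also have "\<dots> \<le> (\<Sum>i<d. (v $ i)\<^sup>2)" using i by (intro member_le_sum) auto
  finally show ?thesis using vec_sq[OF v] by simp
qed

lemma LA_part1:
  fixes P E :: "real mat"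
  assumes P: "P \<in> carrier_mat d d" and E: "E \<in> carrier_mat d d" and d: "d > 0"
    and symP: "\<And>i j. i < d \<Longrightarrow> j < d \<Longrightarrow> P $$ (i, j) = P $$ (j, i)"
    and symE: "\<And>i j. i < d \<Longrightarrow> j < d \<Longrightarrow> E $$ (i, j) = E $$ (j, i)"
    and bE: "lam_max E \<le> \<beta>"
    and m: "\<And>i j. i < d \<Longrightarrow> j < d \<Longrightarrow> \<bar>P $$ (i, j) - E $$ (i, j)\<bar> \<le> m"
  shows "lam_max P \<le> \<beta> + real d * m"
proof -
  have "eigenvalue P (lam_max P)" by (rule sym_lam_max(1)[OF P d symP])
  then obtain v where v: "v \<in> carrier_vec d" "v \<noteq> 0\<^sub>v d" "v \<bullet> (P *\<^sub>v v) = lam_max P * (v \<bullet> v)"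
    using eig_quad[OF P] by blast
  have pos: "v \<bullet> v > 0" by (rule vec_sq_pos[OF v(1,2)])
  let ?y = "\<lambda>i. v $ i"
  have "v \<bullet> (P *\<^sub>v v) = quadf (\<lambda>i j. E $$ (i, j)) d ?y + quadf (\<lambda>i j. P $$ (i, j) - E $$ (i, j)) d ?y"
    unfolding quadf_diff vec_quad[OF P v(1)] by simp
  also have "quadf (\<lambda>i j. E $$ (i, j)) d ?y \<le> \<beta> * (v \<bullet> v)"
  proof -
    have "quadf (\<lambda>i j. E $$ (i, j)) d ?y = v \<bullet> (E *\<^sub>v v)" using vec_quad[OF E v(1)] by simp
    also have "\<dots> \<le> lam_max E * (v \<bullet> v)" by (rule sym_lam_max(3)[OF E d symE v(1)])
    also have "\<dots> \<le> \<beta> * (v \<bullet> v)" using bE pos by (intro mult_right_mono) auto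
    finally show ?thesis .
  qed
  also have "quadf (\<lambda>i j. P $$ (i, j) - E $$ (i, j)) d ?y \<le> real d * m * (v \<bullet> v)"
    using quad_abs_bound[of d "\<lambda>i j. P $$ (i, j) - E $$ (i, j)" m ?y] m vec_sq[OF v(1)] by simp
  finally have "lam_max P * (v \<bullet> v) \<le> (\<beta> + real d * m) * (v \<bullet> v)" using v(3) by (simp add: algebra_simps)
  thus ?thesis using pos by simp
qed

lemma LA_part2:
  fixes D :: "real mat"
  assumes D: "D \<in> carrier_mat d d" and d: "d > 0"
    and symD: "\<And>i j. i < d \<Longrightarrow> j < d \<Longrightarrow> D $$ (i, j) = D $$ (j, i)"
    and m: "\<And>i j. i < d \<Longrightarrow> j < d \<Longrightarrow> \<bar>D $$ (i, j)\<bar> \<le> m"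
  shows "\<bar>lam_max D\<bar> \<le> real d * m" "\<bar>lam_min D\<bar> \<le> real d * m"
proof -
  have gen: "\<bar>e\<bar> \<le> real d * m" if ev: "eigenvalue D e" for e
  proof -
    obtain v where v: "v \<in> carrier_vec d" "v \<noteq> 0\<^sub>v d" "v \<bullet> (D *\<^sub>v v) = e * (v \<bullet> v)"
      using eig_quad[OF D ev] by blast
    have pos: "v \<bullet> v > 0" by (rule vec_sq_pos[OF v(1,2)])
    have "\<bar>e\<bar> * (v \<bullet> v) = \<bar>quadf (\<lambda>i j. D $$ (i, j)) d (\<lambda>i. v $ i)\<bar>"
      using v(3) vec_quad[OF D v(1)] pos by (simp add: abs_mult)
    also have "\<dots> \<le> real d * m * (v \<bullet> v)"
      using quad_abs_bound[of d "\<lambda>i j. D $$ (i, j)" m] m vec_sq[OF v(1)] by simp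
    finally show ?thesis using pos by simp
  qed
  show "\<bar>lam_max D\<bar> \<le> real d * m" by (rule gen[OF sym_lam_max(1)[OF D d symD]])
  show "\<bar>lam_min D\<bar> \<le> real d * m" by (rule gen[OF sym_lam_max(2)[OF D d symD]])
qed

lemma bspl_meas_Suc: "bspl t (Suc r) i \<in> borel_measurable borel"
proof (induction r arbitrary: i)
  case 0
  show ?case by simp
next
  case (Suc r)
  note [measurable] = Suc.IH
  show ?case by simp
qed

lemma bspl_meas[measurable]: "bspl t r i \<in> borel_measurable borel"
proof (cases r)
  case 0
  have "bspl t 0 i = (\<lambda>_. 0)" by (rule ext) simp
  thus ?thesis using 0 by simp
qed (simp add: bspl_meas_Suc)

lemma bspl_supp:
  assumes m: "mono t" and nz: "bspl t (Suc r) i x \<noteq> 0"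
  shows "t i \<le> x \<and> x \<le> t (i + Suc r)"
  using nz
proof (induction r arbitrary: i)
  case 0
  then show ?case by (auto split: if_splits)
next
  case (Suc r)
  have "bspl t (Suc r) i x \<noteq> 0 \<or> bspl t (Suc r) (Suc i) x \<noteq> 0"
    using Suc.prems by auto
  moreover have "t i \<le> t (Suc i)" "t (i + Suc r) \<le> t (i + Suc (Suc r))"
    using m by (auto intro: monoD)
  ultimately show ?case using Suc.IH[of i] Suc.IH[of "Suc i"] by auto
qed

lemma weight_bound:
  fixes w b c :: real
  assumes "b = 0 \<or> (0 \<le> w \<and> w \<le> 1)" "\<bar>b\<bar> \<le> c"
  shows "\<bar>w * b\<bar> \<le> c"
proof (cases "b = 0")
  case True then show ?thesis using assms by simp
next
  case False
  hence "\<bar>w\<bar> \<le> 1" using assms by auto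
  hence "\<bar>w\<bar> * \<bar>b\<bar> \<le> 1 * c" using assms(2) by (intro mult_mono) auto
  thus ?thesis by (simp add: abs_mult)
qed

lemma frac01:
  fixes a b :: real
  assumes "0 \<le> a" "a \<le> b"
  shows "0 \<le> a / b \<and> a / b \<le> 1"
  using assms by (cases "b = 0") (auto simp: divide_le_eq_1)

lemma bspl_bound:
  assumes m: "mono t"
  shows "\<bar>bspl t (Suc r) i x\<bar> \<le> 2 ^ r"
proof (induction r arbitrary: i)
  case 0
  then show ?case by simp
next
  case (Suc r)
  let ?w1 = "(x - t i) / (t (i + Suc r) - t i)"
  let ?w2 = "(t (i + Suc (Suc r)) - x) / (t (i + Suc (Suc r)) - t (Suc i))"
  have "\<bar>?w1 * bspl t (Suc r) i x\<bar> \<le> 2 ^ r"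
  proof (rule weight_bound[OF _ Suc.IH])
    show "bspl t (Suc r) i x = 0 \<or> 0 \<le> ?w1 \<and> ?w1 \<le> 1"
      using bspl_supp[OF m, of r i x] frac01 by force
  qed
  moreover have "\<bar>?w2 * bspl t (Suc r) (Suc i) x\<bar> \<le> 2 ^ r"
  proof (rule weight_bound[OF _ Suc.IH])
    show "bspl t (Suc r) (Suc i) x = 0 \<or> 0 \<le> ?w2 \<and> ?w2 \<le> 1"
      using bspl_supp[OF m, of r "Suc i" x] frac01 by force
  qed
  moreover have "\<bar>?w1 * bspl t (Suc r) i x + ?w2 * bspl t (Suc r) (Suc i) x\<bar> \<le>
     \<bar>?w1 * bspl t (Suc r) i x\<bar> + \<bar>?w2 * bspl t (Suc r) (Suc i) x\<bar>" by (rule abs_triangle_ineq)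
  ultimately have "\<bar>?w1 * bspl t (Suc r) i x + ?w2 * bspl t (Suc r) (Suc i) x\<bar> \<le> 2 ^ r + 2 ^ r"
    by (meson add_mono order_trans)
  hence "\<bar>?w1 * bspl t (Suc r) i x + ?w2 * bspl t (Suc r) (Suc i) x\<bar> \<le> 2 ^ Suc r"
    by (simp only: power_Suc mult_2)
  thus ?case unfolding bspl.simps(3) .
qed

lemma s_mono:
  fixes s :: "nat \<Rightarrow> real"
  assumes "\<And>i. i < k \<Longrightarrow> s i < s (Suc i)"
  shows "i \<le> j \<Longrightarrow> j \<le> k \<Longrightarrow> s i \<le> s j"
proof (induction j)
  case 0 then show ?case by simp
next
  case (Suc j)
  show ?case
  proof (cases "i = Suc j")
    case True then show ?thesis by simp
  next
    case False
    hence "s i \<le> s j" using Suc by simp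
    also have "s j \<le> s (Suc j)" using assms[of j] Suc.prems by simp
    finally show ?thesis .
  qed
qed

lemma ext_knot_mono:
  fixes s :: "nat \<Rightarrow> real"
  assumes k: "k \<ge> 1" and s0: "s 0 = 0" and sk: "s k = 1"
    and inc: "\<And>i. i < k \<Longrightarrow> s i < s (Suc i)"
  shows "mono (ext_knot l k s)"
proof (rule incseq_SucI)
  fix i
  have rng: "0 \<le> s j \<and> s j \<le> 1" if "j \<le> k" for j
    using s_mono[of k s, OF inc, of 0 j] s_mono[of k s, OF inc, of j k] that s0 sk by simp
  show "ext_knot l k s i \<le> ext_knot l k s (Suc i)"
    unfolding ext_knot_def
    using rng s_mono[of k s, OF inc, of "i - l" "Suc i - l"] k
    by (auto simp: Suc_diff_le)
qed

lemma Bspline_bound: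
  fixes s :: "nat \<Rightarrow> real"
  assumes k: "k \<ge> 1" and s0: "s 0 = 0" and sk: "s k = 1"
    and inc: "\<And>i. i < k \<Longrightarrow> s i < s (Suc i)"
  shows "\<bar>Bspline l k s m x\<bar> \<le> 2 ^ l"
  unfolding Bspline_def by (rule bspl_bound[OF ext_knot_mono[OF assms]])

lemma Bspline_meas[measurable]: "Bspline l k s m \<in> borel_measurable borel"
  unfolding Bspline_def by simp

lemma exp_quad_bound:
  fixes z :: real
  assumes "\<bar>z\<bar> \<le> 1"
  shows "exp z \<le> 1 + z + z\<^sup>2"
proof (cases "z \<ge> 0")
  case True then show ?thesis using assms exp_bound by simp
next
  case False
  define y where "y = - z"
  have y: "0 < y" "y \<le> 1" using False assms by (auto simp: y_def)
  have "1 + y \<le> exp y" by simp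
  have "(1 - y + y\<^sup>2) * (1 + y) = 1 + y ^ 3" by (simp add: algebra_simps power2_eq_square power3_eq_cube)
  also have "\<dots> \<ge> 1" using y by simp
  finally have "1 \<le> (1 - y + y\<^sup>2) * (1 + y)" .
  also have "\<dots> \<le> (1 - y + y\<^sup>2) * exp y"
  proof (rule mult_left_mono)
    show "1 + y \<le> exp y" by simp
    have "0 \<le> y\<^sup>2" by simp
    thus "0 \<le> 1 - y + y\<^sup>2" using y by linarith
  qed
  finally have "exp (- y) \<le> 1 - y + y\<^sup>2"
    by (simp add: exp_minus field_simps)
  thus ?thesis by (simp add: y_def)
qed

lemma (in prob_space) bernstein_ge:
  fixes Y :: "nat \<Rightarrow> 'a \<Rightarrow> real"
  assumes indep: "indep_vars (\<lambda>_. borel) Y {..<n}"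
    and bnd: "\<And>i \<omega>. i < n \<Longrightarrow> \<omega> \<in> space M \<Longrightarrow> \<bar>Y i \<omega> - \<mu>\<bar> \<le> R"
    and var: "\<And>i. i < n \<Longrightarrow> expectation (\<lambda>\<omega>. (Y i \<omega> - \<mu>)\<^sup>2) \<le> V"
    and mean: "\<And>i. i < n \<Longrightarrow> expectation (Y i) = \<mu>"
    and lam: "0 < l" "l * R \<le> 1"
  shows "prob {\<omega> \<in> space M. (\<Sum>i<n. Y i \<omega> - \<mu>) \<ge> \<epsilon>} \<le> exp (- l * \<epsilon> + real n * l\<^sup>2 * V)"
proof -
  have rv[measurable]: "Y i \<in> borel_measurable M" if "i < n" for i
    using indep that unfolding indep_vars_def by auto
  have fac: "(\<integral>\<^sup>+x. ennreal (exp (l * (Y i x - \<mu>))) \<partial>M) \<le> ennreal (exp (l\<^sup>2 * V))" if i: "i < n" for i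
  proof -
    have mz: "(\<lambda>x. Y i x - \<mu>) \<in> borel_measurable M" using i by measurable
    have bz: "AE x in M. norm (Y i x - \<mu>) \<le> R" using bnd[OF i] by auto
    have iz: "integrable M (\<lambda>x. Y i x - \<mu>)" by (rule integrable_const_bound[OF bz mz])
    have iz2: "integrable M (\<lambda>x. (Y i x - \<mu>)\<^sup>2)"
    proof (rule integrable_const_bound[where B="R\<^sup>2"])
      show "AE x in M. norm ((Y i x - \<mu>)\<^sup>2) \<le> R\<^sup>2"
      proof (intro AE_I2)
        fix x assume x: "x \<in> space M"
        have "\<bar>Y i x - \<mu>\<bar> \<le> \<bar>R\<bar>" using bnd[OF i x] by linarith
        thus "norm ((Y i x - \<mu>)\<^sup>2) \<le> R\<^sup>2" by (simp add: abs_le_square_iff)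
      qed
    qed (use i in measurable)
    have ie: "integrable M (\<lambda>x. exp (l * (Y i x - \<mu>)))"
    proof (rule integrable_const_bound[where B="exp (l * R)"])
      show "AE x in M. norm (exp (l * (Y i x - \<mu>))) \<le> exp (l * R)"
      proof (intro AE_I2)
        fix x assume x: "x \<in> space M"
        have "Y i x - \<mu> \<le> R" using bnd[OF i x] by linarith
        hence "l * (Y i x - \<mu>) \<le> l * R" using lam by (intro mult_left_mono) auto
        thus "norm (exp (l * (Y i x - \<mu>))) \<le> exp (l * R)" by simp
      qed
    qed (use i in measurable)
    have "(\<integral>\<^sup>+x. ennreal (exp (l * (Y i x - \<mu>))) \<partial>M) = ennreal (expectation (\<lambda>x. exp (l * (Y i x - \<mu>))))"
      by (rule nn_integral_eq_integral[OF ie]) auto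
    also have "expectation (\<lambda>x. exp (l * (Y i x - \<mu>))) \<le> expectation (\<lambda>x. 1 + l * (Y i x - \<mu>) + l\<^sup>2 * (Y i x - \<mu>)\<^sup>2)"
    proof (rule integral_mono[OF ie])
      show "integrable M (\<lambda>x. 1 + l * (Y i x - \<mu>) + l\<^sup>2 * (Y i x - \<mu>)\<^sup>2)"
        using iz iz2 by auto
      fix x assume x: "x \<in> space M"
      have "\<bar>l * (Y i x - \<mu>)\<bar> \<le> 1"
      proof -
        have "l * \<bar>Y i x - \<mu>\<bar> \<le> l * R" using bnd[OF i x] lam by (intro mult_left_mono) auto
        moreover have "\<bar>l * (Y i x - \<mu>)\<bar> = l * \<bar>Y i x - \<mu>\<bar>" using lam by (simp add: abs_mult)
        ultimately show ?thesis using lam by linarith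
      qed
      from exp_quad_bound[OF this] show "exp (l * (Y i x - \<mu>)) \<le> 1 + l * (Y i x - \<mu>) + l\<^sup>2 * (Y i x - \<mu>)\<^sup>2"
        by (simp add: power_mult_distrib)
    qed
    also have "expectation (\<lambda>x. 1 + l * (Y i x - \<mu>) + l\<^sup>2 * (Y i x - \<mu>)\<^sup>2)
        = 1 + l * expectation (\<lambda>x. Y i x - \<mu>) + l\<^sup>2 * expectation (\<lambda>x. (Y i x - \<mu>)\<^sup>2)"
    proof -
      have "expectation (\<lambda>x. 1 + l * (Y i x - \<mu>) + l\<^sup>2 * (Y i x - \<mu>)\<^sup>2)
         = expectation (\<lambda>x. 1 + l * (Y i x - \<mu>)) + expectation (\<lambda>x. l\<^sup>2 * (Y i x - \<mu>)\<^sup>2)"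
        using iz iz2 by (intro Bochner_Integration.integral_add) auto
      also have "expectation (\<lambda>x. 1 + l * (Y i x - \<mu>)) = expectation (\<lambda>x. 1) + expectation (\<lambda>x. l * (Y i x - \<mu>))"
        using iz by (intro Bochner_Integration.integral_add) auto
      also have "expectation (\<lambda>x. 1::real) = 1" using prob_space by simp
      finally show ?thesis by simp
    qed
    also have "expectation (\<lambda>x. Y i x - \<mu>) = 0"
    proof -
      have "integrable M (\<lambda>x. (Y i x - \<mu>) + \<mu>)" using iz by (intro Bochner_Integration.integrable_add) auto
      hence iy: "integrable M (Y i)" by simp
      have "expectation (\<lambda>x. Y i x - \<mu>) = expectation (Y i) - expectation (\<lambda>x. \<mu>)"
        using iy by (rule Bochner_Integration.integral_diff) simp
      also have "expectation (\<lambda>x. \<mu>) = \<mu>" using prob_space by simp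
      finally show ?thesis using mean[OF i] by simp
    qed
    also have "1 + l * 0 + l\<^sup>2 * expectation (\<lambda>x. (Y i x - \<mu>)\<^sup>2) \<le> 1 + l\<^sup>2 * V"
      using var[OF i] by (simp add: mult_left_mono)
    also have "\<dots> \<le> exp (l\<^sup>2 * V)" by (rule exp_ge_add_one_self)
    finally show ?thesis by (simp add: ennreal_leI)
  qed
  have "ennreal (prob {\<omega> \<in> space M. (\<Sum>i<n. Y i \<omega> - \<mu>) \<ge> \<epsilon>}) = emeasure M {\<omega> \<in> space M. (\<Sum>i<n. Y i \<omega> - \<mu>) \<ge> \<epsilon>}"
    by (simp add: emeasure_eq_measure)
  also have "\<dots> \<le> ennreal (exp (-l*\<epsilon>)) * (\<integral>\<^sup>+x\<in>space M. exp (l * (\<Sum>i<n. Y i x - \<mu>)) \<partial>M)"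
    by (intro Chernoff_ineq_nn_integral_ge lam) auto
  also have "(\<integral>\<^sup>+x\<in>space M. exp (l * (\<Sum>i<n. Y i x - \<mu>)) \<partial>M) =
             (\<integral>\<^sup>+x. (\<Prod>i<n. ennreal (exp (l * (Y i x - \<mu>)))) \<partial>M)"
    by (intro nn_integral_cong)
       (simp_all add: sum_distrib_left exp_sum prod_ennreal)
  also have "\<dots> = (\<Prod>i<n. \<integral>\<^sup>+x. ennreal (exp (l * (Y i x - \<mu>))) \<partial>M)"
    by (intro indep_vars_nn_integral indep_vars_compose2[OF indep]) auto
  also have "ennreal (exp (-l * \<epsilon>)) * \<dots> \<le> ennreal (exp (-l * \<epsilon>)) * (\<Prod>i<n. ennreal (exp (l\<^sup>2 * V)))"
    by (intro mult_left_mono prod_mono_ennreal fac) auto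
  also have "\<dots> = ennreal (exp (-l * \<epsilon>)) * ennreal (exp (l\<^sup>2 * V) ^ n)"
    by (subst prod_ennreal) auto
  also have "\<dots> = ennreal (exp (-l * \<epsilon>) * exp (l\<^sup>2 * V) ^ n)"
    by (rule ennreal_mult[symmetric]) auto
  also have "exp (-l * \<epsilon>) * exp (l\<^sup>2 * V) ^ n = exp (- l * \<epsilon> + real n * l\<^sup>2 * V)"
  proof -
    have "exp (l\<^sup>2 * V) ^ n = exp (real n * (l\<^sup>2 * V))" by (rule exp_of_nat_mult[symmetric])
    thus ?thesis by (simp add: exp_add[symmetric] mult.assoc)
  qed
  finally show ?thesis by (subst (asm) ennreal_le_iff) simp_all
qed

lemma (in prob_space) bernstein_abs:
  fixes Y :: "nat \<Rightarrow> 'a \<Rightarrow> real"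
  assumes indep: "indep_vars (\<lambda>_. borel) Y {..<n}" and n: "n > 0"
    and bnd: "\<And>i \<omega>. i < n \<Longrightarrow> \<omega> \<in> space M \<Longrightarrow> \<bar>Y i \<omega>\<bar> \<le> C"
    and mean: "\<And>i. i < n \<Longrightarrow> expectation (Y i) = \<mu>"
    and var: "\<And>i. i < n \<Longrightarrow> expectation (\<lambda>\<omega>. (Y i \<omega>)\<^sup>2) \<le> V"
    and C: "C > 0" and V: "V > 0" and u: "u > 0"
  shows "prob {\<omega> \<in> space M. \<bar>(1 / real n) * (\<Sum>i<n. Y i \<omega>) - \<mu>\<bar> \<ge> u}
          \<le> 2 * exp (- real n * min (u\<^sup>2 / (4 * V)) (u / (4 * C)))"
proof -
  have rv[measurable]: "Y i \<in> borel_measurable M" if "i < n" for i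
    using indep that unfolding indep_vars_def by auto
  have intY: "integrable M (Y i)" if i: "i < n" for i
    by (rule integrable_const_bound[where B=C]) (use bnd[OF i] in auto, use i in measurable)
  have intY2: "integrable M (\<lambda>x. (Y i x)\<^sup>2)" if i: "i < n" for i
  proof (rule integrable_const_bound[where B="C\<^sup>2"])
    show "AE x in M. norm ((Y i x)\<^sup>2) \<le> C\<^sup>2"
    proof (intro AE_I2)
      fix x assume x: "x \<in> space M"
      have "\<bar>Y i x\<bar> \<le> \<bar>C\<bar>" using bnd[OF i x] by linarith
      thus "norm ((Y i x)\<^sup>2) \<le> C\<^sup>2" by (simp add: abs_le_square_iff)
    qed
  qed (use i in measurable)
  have muC: "\<bar>\<mu>\<bar> \<le> C"
  proof -
    have "\<bar>expectation (Y 0)\<bar> \<le> expectation (\<lambda>x. \<bar>Y 0 x\<bar>)" by (rule integral_abs_bound)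
    also have "\<dots> \<le> expectation (\<lambda>x. C)"
      using n bnd[of 0] intY[of 0] by (intro integral_mono) auto
    finally show ?thesis using mean[of 0] n prob_space by simp
  qed
  have var2: "expectation (\<lambda>\<omega>. (Y i \<omega> - \<mu>)\<^sup>2) \<le> V" if i: "i < n" for i
  proof -
    have "expectation (\<lambda>\<omega>. (Y i \<omega> - \<mu>)\<^sup>2) = expectation (\<lambda>\<omega>. (Y i \<omega>)\<^sup>2 + ((-2 * \<mu>) * Y i \<omega> + \<mu>\<^sup>2))"
      by (intro Bochner_Integration.integral_cong) (auto simp: power2_eq_square algebra_simps)
    also have "\<dots> = expectation (\<lambda>\<omega>. (Y i \<omega>)\<^sup>2) + expectation (\<lambda>\<omega>. (-2 * \<mu>) * Y i \<omega> + \<mu>\<^sup>2)"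
      using intY[OF i] intY2[OF i] by (intro Bochner_Integration.integral_add) auto
    also have "expectation (\<lambda>\<omega>. (-2 * \<mu>) * Y i \<omega> + \<mu>\<^sup>2) = expectation (\<lambda>\<omega>. (-2 * \<mu>) * Y i \<omega>) + expectation (\<lambda>\<omega>. \<mu>\<^sup>2)"
      using intY[OF i] by (intro Bochner_Integration.integral_add) auto
    also have "expectation (\<lambda>\<omega>. (-2 * \<mu>) * Y i \<omega>) = (-2 * \<mu>) * \<mu>"
      using mean[OF i] by simp
    also have "expectation (\<lambda>\<omega>. \<mu>\<^sup>2) = \<mu>\<^sup>2" using prob_space by simp
    finally have "expectation (\<lambda>\<omega>. (Y i \<omega> - \<mu>)\<^sup>2) = expectation (\<lambda>\<omega>. (Y i \<omega>)\<^sup>2) - \<mu>\<^sup>2"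
      by (simp add: power2_eq_square)
    also have "\<dots> \<le> V" using var[OF i] by (smt (verit) zero_le_power2)
    finally show ?thesis .
  qed
  define l where "l = min (u / (2 * V)) (1 / (2 * C))"
  have l: "0 < l" "l * (2 * C) \<le> 1" using u V C by (auto simp: l_def min_def field_simps)
  have luv: "l * V \<le> u / 2" using V by (auto simp: l_def min_def field_simps)
  have key: "- l * (real n * u) + real n * l\<^sup>2 * V \<le> - real n * min (u\<^sup>2 / (4 * V)) (u / (4 * C))"
  proof -
    have "real n * l\<^sup>2 * V = real n * l * (l * V)" by (simp add: power2_eq_square)
    also have "\<dots> \<le> real n * l * (u / 2)" using luv l by (intro mult_left_mono) auto
    finally have h: "real n * l\<^sup>2 * V \<le> real n * l * (u / 2)" .
    have "- l * (real n * u) + real n * l * (u / 2) = - real n * (l * u / 2)" by (simp add: field_simps)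
    hence "- l * (real n * u) + real n * l\<^sup>2 * V \<le> - real n * (l * u / 2)" using h by linarith
    also have "l * u / 2 = min (u\<^sup>2 / (4 * V)) (u / (4 * C))"
      using u V C by (auto simp: l_def min_def field_simps power2_eq_square)
    finally show ?thesis .
  qed
  have ev: "{\<omega> \<in> space M. \<bar>(1 / real n) * (\<Sum>i<n. Y i \<omega>) - \<mu>\<bar> \<ge> u}
     = {\<omega> \<in> space M. (\<Sum>i<n. Y i \<omega> - \<mu>) \<ge> real n * u} \<union> {\<omega> \<in> space M. (\<Sum>i<n. - Y i \<omega> - (- \<mu>)) \<ge> real n * u}"
  proof -
    have "\<bar>(1 / real n) * (\<Sum>i<n. Y i \<omega>) - \<mu>\<bar> = \<bar>\<Sum>i<n. Y i \<omega> - \<mu>\<bar> / real n" for \<omega>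
      using n by (simp add: sum_subtractf field_simps)
    moreover have "(\<Sum>i<n. - Y i \<omega> - (- \<mu>)) = - (\<Sum>i<n. Y i \<omega> - \<mu>)" for \<omega>
      by (simp add: sum_negf[symmetric])
    ultimately show ?thesis using n by (auto simp: le_divide_eq abs_le_iff mult.commute)
  qed
  have p1: "prob {\<omega> \<in> space M. (\<Sum>i<n. Y i \<omega> - \<mu>) \<ge> real n * u} \<le> exp (- l * (real n * u) + real n * l\<^sup>2 * V)"
  proof (rule bernstein_ge[OF indep _ var2 mean l])
    show "\<bar>Y i \<omega> - \<mu>\<bar> \<le> 2 * C" if "i < n" "\<omega> \<in> space M" for i \<omega>
      using bnd[OF that] muC by linarith
  qed
  have p2: "prob {\<omega> \<in> space M. (\<Sum>i<n. - Y i \<omega> - (- \<mu>)) \<ge> real n * u} \<le> exp (- l * (real n * u) + real n * l\<^sup>2 * V)"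
  proof (rule bernstein_ge[OF _ _ _ _ l])
    show "indep_vars (\<lambda>_. borel) (\<lambda>i \<omega>. - Y i \<omega>) {..<n}"
      using indep_vars_compose2[OF indep, of "\<lambda>i x. - x" "\<lambda>_. borel"] by simp
    show "\<bar>- Y i \<omega> - - \<mu>\<bar> \<le> 2 * C" if "i < n" "\<omega> \<in> space M" for i \<omega>
      using bnd[OF that] muC by linarith
    show "expectation (\<lambda>\<omega>. (- Y i \<omega> - - \<mu>)\<^sup>2) \<le> V" if "i < n" for i
      using var2[OF that] by (simp add: power2_commute)
    show "expectation (\<lambda>\<omega>. - Y i \<omega>) = - \<mu>" if "i < n" for i
      using mean[OF that] by simp
  qed
  have "prob {\<omega> \<in> space M. \<bar>(1 / real n) * (\<Sum>i<n. Y i \<omega>) - \<mu>\<bar> \<ge> u}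
     \<le> prob {\<omega> \<in> space M. (\<Sum>i<n. Y i \<omega> - \<mu>) \<ge> real n * u} + prob {\<omega> \<in> space M. (\<Sum>i<n. - Y i \<omega> - (- \<mu>)) \<ge> real n * u}"
  proof -
    have m1[measurable]: "(\<lambda>\<omega>. \<Sum>i<n. Y i \<omega> - \<mu>) \<in> borel_measurable M"
      using rv by (intro borel_measurable_sum) auto
    have m2[measurable]: "(\<lambda>\<omega>. \<Sum>i<n. - Y i \<omega> - (- \<mu>)) \<in> borel_measurable M"
      using rv by (intro borel_measurable_sum) auto
    show ?thesis unfolding ev by (intro measure_Un_le) measurable
  qed
  also have "\<dots> \<le> 2 * exp (- l * (real n * u) + real n * l\<^sup>2 * V)" using p1 p2 by simp
  also have "\<dots> \<le> 2 * exp (- real n * min (u\<^sup>2 / (4 * V)) (u / (4 * C)))" using key by simp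
  finally show ?thesis .
qed

lemma arith1:
  fixes D C b3 :: real
  assumes D: "D \<ge> 1" and C: "C > 0" and b3: "b3 > 0"
  shows "1 / (4 * C * (b3 + 1)) / D ^ 3 \<le> min ((1 / D\<^sup>2)\<^sup>2 / (4 * (C * b3 / D))) ((1 / D\<^sup>2) / (4 * C))"
proof -
  have Dp: "D > 0" using D by simp
  have e1: "(1 / D\<^sup>2)\<^sup>2 / (4 * (C * b3 / D)) = 1 / (4 * C * b3 * D ^ 3)"
    using Dp C b3 by (simp add: field_simps power2_eq_square power3_eq_cube)
  have e2: "1 / (4 * C * (b3 + 1)) / D ^ 3 = 1 / (4 * C * (b3 + 1) * D ^ 3)" by simp
  have "1 / (4 * C * (b3 + 1) * D ^ 3) \<le> 1 / (4 * C * b3 * D ^ 3)"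
    using Dp C b3 by (intro divide_left_mono mult_right_mono mult_left_mono mult_pos_pos) auto
  moreover have "1 / (4 * C * (b3 + 1) * D ^ 3) \<le> (1 / D\<^sup>2) / (4 * C)"
  proof -
    have "D\<^sup>2 \<le> D ^ 3" using D by (simp add: power_increasing)
    also have "\<dots> \<le> (b3 + 1) * D ^ 3" using b3 Dp by simp
    finally have "4 * C * D\<^sup>2 \<le> 4 * C * ((b3 + 1) * D ^ 3)" using C by simp
    hence "1 / (4 * C * ((b3 + 1) * D ^ 3)) \<le> 1 / (4 * C * D\<^sup>2)"
      using Dp C b3 by (intro divide_left_mono) (auto intro!: mult_pos_pos)
    moreover have "(1 / D\<^sup>2) / (4 * C) = 1 / (4 * C * D\<^sup>2)" by simp
    moreover have "4 * C * (b3 + 1) * D ^ 3 = 4 * C * ((b3 + 1) * D ^ 3)" by (simp add: mult.assoc)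
    ultimately show ?thesis by metis
  qed
  ultimately show ?thesis using e1 e2 by simp
qed

lemma arith2:
  fixes D C b3 c5 \<tau> :: real and n :: real
  assumes D: "D \<ge> 1" and C: "C > 0" and b3: "b3 > 0" and c5: "c5 > 0" and \<tau>: "\<tau> \<ge> 0" and n: "n \<ge> 1"
  defines "u \<equiv> c5 / D * n powr (- \<tau>) / D"
  shows "min (c5\<^sup>2) c5 / (4 * C * (b3 + 1)) / D ^ 3 * n powr (1 - 2 * \<tau>)
           \<le> n * min (u\<^sup>2 / (4 * (C * b3 / D))) (u / (4 * C))"
proof -
  have Dp: "D > 0" using D by simp
  have np: "n > 0" using n by simp
  define p where "p = n powr (- \<tau>)"
  define q where "q = n powr (1 - 2 * \<tau>)"
  have pp: "p > 0" using np by (simp add: p_def)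
  have qp: "q > 0" using np by (simp add: q_def)
  have np2: "n * p\<^sup>2 = q"
  proof -
    have "n powr (1 + - \<tau> + - \<tau>) = n powr 1 * n powr (- \<tau>) * n powr (- \<tau>)" by (simp only: powr_add)
    moreover have "n powr 1 = n" using np by simp
    moreover have "1 + - \<tau> + - \<tau> = 1 - 2 * \<tau>" by simp
    ultimately show ?thesis by (simp add: q_def p_def power2_eq_square)
  qed
  have np1: "q \<le> n * p"
  proof -
    have "n powr (1 + - \<tau>) = n powr 1 * n powr (- \<tau>)" by (simp only: powr_add)
    moreover have "n powr 1 = n" using np by simp
    ultimately have "n * p = n powr (1 - \<tau>)" by (simp add: p_def)
    moreover have "n powr (1 - 2 * \<tau>) \<le> n powr (1 - \<tau>)" using n \<tau> by (intro powr_mono) auto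
    ultimately show ?thesis by (simp add: q_def)
  qed
  define c where "c = min (c5\<^sup>2) c5 / (4 * C * (b3 + 1))"
  have u: "u = c5 * p / D\<^sup>2" by (simp add: u_def p_def power2_eq_square)
  have A: "c / D ^ 3 * q \<le> n * (u\<^sup>2 / (4 * (C * b3 / D)))"
  proof -
    have "n * (u\<^sup>2 / (4 * (C * b3 / D))) = c5\<^sup>2 * (n * p\<^sup>2) / (4 * C * b3 * D ^ 3)"
      using Dp C b3 by (simp add: u field_simps power2_eq_square power3_eq_cube)
    also have "\<dots> = c5\<^sup>2 / (4 * C * b3) / D ^ 3 * q" using np2 by (simp add: field_simps)
    finally have e: "n * (u\<^sup>2 / (4 * (C * b3 / D))) = c5\<^sup>2 / (4 * C * b3) / D ^ 3 * q" .
    have "c \<le> c5\<^sup>2 / (4 * C * (b3 + 1))" unfolding c_def using C b3 by (intro divide_right_mono) auto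
    also have "\<dots> \<le> c5\<^sup>2 / (4 * C * b3)" using C b3 by (intro divide_left_mono) auto
    finally have "c \<le> c5\<^sup>2 / (4 * C * b3)" .
    hence "c / D ^ 3 * q \<le> c5\<^sup>2 / (4 * C * b3) / D ^ 3 * q"
      using Dp qp by (intro mult_right_mono divide_right_mono) auto
    thus ?thesis using e by simp
  qed
  have B: "c / D ^ 3 * q \<le> n * (u / (4 * C))"
  proof -
    have "n * (u / (4 * C)) = c5 * (n * p) / (4 * C * D\<^sup>2)"
      using Dp C by (simp add: u field_simps)
    also have "\<dots> \<ge> c5 * q / (4 * C * D\<^sup>2)"
      using np1 c5 C Dp by (intro divide_right_mono mult_left_mono) auto
    finally have e: "c5 * q / (4 * C * D\<^sup>2) \<le> n * (u / (4 * C))" .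
    have "c \<le> c5 / (4 * C * (b3 + 1))" unfolding c_def using C b3 by (intro divide_right_mono) auto
    also have "\<dots> \<le> c5 / (4 * C)" using C b3 c5 by (intro divide_left_mono) auto
    finally have c1: "c \<le> c5 / (4 * C)" .
    have "D\<^sup>2 \<le> D ^ 3" using D by (simp add: power_increasing)
    have "c / D ^ 3 * q \<le> c5 / (4 * C) / D ^ 3 * q"
      using c1 Dp qp by (intro mult_right_mono divide_right_mono) auto
    also have "\<dots> \<le> c5 / (4 * C) / D\<^sup>2 * q"
      using \<open>D\<^sup>2 \<le> D ^ 3\<close> Dp qp c5 C by (intro mult_right_mono divide_left_mono) auto
    also have "\<dots> = c5 * q / (4 * C * D\<^sup>2)" by (simp add: field_simps)
    finally show ?thesis using e by linarith
  qed
  have "min (u\<^sup>2 / (4 * (C * b3 / D))) (u / (4 * C)) = u\<^sup>2 / (4 * (C * b3 / D))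
      \<or> min (u\<^sup>2 / (4 * (C * b3 / D))) (u / (4 * C)) = u / (4 * C)" by (simp add: min_def)
  thus ?thesis unfolding c_def[symmetric] q_def[symmetric] using A B by metis
qed

lemma union_bound_pairs:
  fixes M :: "'a measure" and A :: "nat \<Rightarrow> nat \<Rightarrow> 'a set" and Q :: "'a set"
  assumes "finite_measure M"
    and sets: "\<And>a b. a < d \<Longrightarrow> b < d \<Longrightarrow> A a b \<in> sets M"
    and sub: "Q \<subseteq> (\<Union>a<d. \<Union>b<d. A a b)"
    and bnd: "\<And>a b. a < d \<Longrightarrow> b < d \<Longrightarrow> measure M (A a b) \<le> c"
  shows "measure M Q \<le> real d ^ 2 * c"
proof -
  interpret finite_measure M by fact
  let ?I = "{..<d} \<times> {..<d}"
  have eq: "(\<Union>a<d. \<Union>b<d. A a b) = (\<Union>p\<in>?I. A (fst p) (snd p))" by force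
  have S: "(\<Union>p\<in>?I. A (fst p) (snd p)) \<in> sets M" using sets by auto
  have "measure M Q \<le> measure M (\<Union>p\<in>?I. A (fst p) (snd p))"
    using sub eq S by (intro finite_measure_mono) auto
  also have "\<dots> \<le> (\<Sum>p\<in>?I. measure M (A (fst p) (snd p)))"
    using sets by (intro finite_measure_subadditive_finite) auto
  also have "\<dots> \<le> (\<Sum>p\<in>?I. c)" using bnd by (intro sum_mono) auto
  also have "\<dots> = real d ^ 2 * c" by (simp add: power2_eq_square)
  finally show ?thesis .
qed

theorem lemma8p1:
  fixes M :: "'a measure" and X :: "nat \<Rightarrow> 'a \<Rightarrow> real"
    and l :: nat and k :: "nat \<Rightarrow> nat" and s :: "nat \<Rightarrow> nat \<Rightarrow> real"
    and \<tau> b2 b3 :: real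
  defines "EM \<equiv> (\<lambda>n. Matrix.mat (k n + l) (k n + l)
            (\<lambda>(a, b). prob_space.expectation M (\<lambda>\<omega>. Bspline l (k n) (s n) a (X 0 \<omega>) * Bspline l (k n) (s n) b (X 0 \<omega>))))"
    and "PM \<equiv> (\<lambda>n \<omega>. Matrix.mat (k n + l) (k n + l)
            (\<lambda>(a, b). (1 / real n) * (\<Sum>i<n. Bspline l (k n) (s n) a (X i \<omega>) * Bspline l (k n) (s n) b (X i \<omega>))))"
  assumes "prob_space M"
    and "\<And>i. X i \<in> borel_measurable M"
    and "prob_space.indep_vars M (\<lambda>_. borel) X UNIV"
    and "\<And>i. distr M borel (X i) = distr M borel (X 0)"
    and "\<And>i \<omega>. \<omega> \<in> space M \<Longrightarrow> X i \<omega> \<in> {0..1}"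
    and "\<And>n. k n \<ge> 1"
    and "\<And>n. s n 0 = 0" and "\<And>n. s n (k n) = 1"
    and "\<And>n i. i < k n \<Longrightarrow> s n i < s n (Suc i)"
    and "\<tau> \<ge> 0" and "b2 > 0" and "b3 > 0"
    and "\<And>n. lam_max (EM n) \<le> b2 / real (k n + l)"
    and "\<And>n m. m < k n + l \<Longrightarrow>
           prob_space.expectation M (\<lambda>\<omega>. (Bspline l (k n) (s n) m (X 0 \<omega>))\<^sup>2) \<le> b3 / real (k n + l)"
  shows "(\<exists>c4>0. \<forall>\<^sub>F n in sequentially.
            prob_space.prob M {\<omega> \<in> space M. lam_max (PM n \<omega>) \<ge> (b2 + 1) / real (k n + l)}
              \<le> 2 * real (k n + l) ^ 2 * exp (- c4 * real n / real (k n + l) ^ 3))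
       \<and> (\<forall>c5>0. \<exists>c6>0. \<forall>\<^sub>F n in sequentially.
            prob_space.prob M {\<omega> \<in> space M.
                max \<bar>lam_max (PM n \<omega> - EM n)\<bar> \<bar>lam_min (PM n \<omega> - EM n)\<bar> \<ge> c5 / real (k n + l) * real n powr (- \<tau>)}
              \<le> 2 * real (k n + l) ^ 2 * exp (- c6 / real (k n + l) ^ 3 * real n powr (1 - 2 * \<tau>)))"
proof -
  note A = assms(3-)
  interpret P: prob_space M by (rule A(1))
  note Xm[measurable] = A(2)
  define d where "d = (\<lambda>n. k n + l)"
  define B where "B = (\<lambda>n a x. Bspline l (k n) (s n) a x)"
  define C :: real where "C = 4 ^ l"
  define V where "V = (\<lambda>n. C * b3 / real (d n))"
  have Cp: "C > 0" by (simp add: C_def)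
  have dpos: "d n > 0" for n using A(6)[of n] by (simp add: d_def)
  have dge: "real (d n) \<ge> 1" for n using dpos[of n] by simp
  have Bm[measurable]: "B n a \<in> borel_measurable borel" for n a by (simp add: B_def)
  have Bb: "\<bar>B n a x\<bar> \<le> 2 ^ l" for n a x
    unfolding B_def by (rule Bspline_bound[OF A(6) A(7) A(8) A(9)])
  have Yb: "\<bar>B n a x * B n b x\<bar> \<le> C" for n a b x
  proof -
    have "\<bar>B n a x\<bar> * \<bar>B n b x\<bar> \<le> 2 ^ l * 2 ^ l" using Bb by (intro mult_mono) auto
    thus ?thesis by (simp add: C_def abs_mult power_mult_distrib[symmetric])
  qed
  have Y2b: "(B n a x * B n b x)\<^sup>2 \<le> C * (B n a x)\<^sup>2" for n a b x
  proof -
    have "(B n b x)\<^sup>2 \<le> (2 ^ l)\<^sup>2" using Bb[of n b x] by (simp add: abs_le_square_iff[symmetric])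
    hence "(B n b x)\<^sup>2 \<le> C" by (simp add: C_def power_mult_distrib[symmetric] power_mult[symmetric] power2_eq_square)
    hence "(B n a x)\<^sup>2 * (B n b x)\<^sup>2 \<le> (B n a x)\<^sup>2 * C" by (intro mult_left_mono) auto
    thus ?thesis by (simp add: power_mult_distrib mult.commute)
  qed
  define mu where "mu = (\<lambda>n a b. P.expectation (\<lambda>\<omega>. B n a (X 0 \<omega>) * B n b (X 0 \<omega>)))"
  define Dn where "Dn = (\<lambda>n a b \<omega>. (1 / real n) * (\<Sum>i<n. B n a (X i \<omega>) * B n b (X i \<omega>)) - mu n a b)"
  have EMc: "EM n \<in> carrier_mat (d n) (d n)" for n by (simp add: EM_def d_def)
  have PMc: "PM n \<omega> \<in> carrier_mat (d n) (d n)" for n \<omega> by (simp add: PM_def d_def)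
  have EMe: "EM n $$ (a, b) = mu n a b" if "a < d n" "b < d n" for n a b
    using that by (simp add: EM_def mu_def B_def d_def)
  have PMe: "PM n \<omega> $$ (a, b) = (1 / real n) * (\<Sum>i<n. B n a (X i \<omega>) * B n b (X i \<omega>))"
    if "a < d n" "b < d n" for n a b \<omega>
    using that by (simp add: PM_def B_def d_def)
  have De: "(PM n \<omega> - EM n) $$ (a, b) = Dn n a b \<omega>" if "a < d n" "b < d n" for n a b \<omega>
    using that EMc[of n] PMc[of n \<omega>] by (simp add: EMe PMe Dn_def)
  have Dc: "PM n \<omega> - EM n \<in> carrier_mat (d n) (d n)" for n \<omega> using EMc[of n] by (rule minus_carrier_mat)
  have symE: "EM n $$ (a, b) = EM n $$ (b, a)" if "a < d n" "b < d n" for n a b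
    using that by (simp add: EMe mu_def mult.commute)
  have symP: "PM n \<omega> $$ (a, b) = PM n \<omega> $$ (b, a)" if "a < d n" "b < d n" for n a b \<omega>
    using that by (simp add: PMe mult.commute)
  have symD: "(PM n \<omega> - EM n) $$ (a, b) = (PM n \<omega> - EM n) $$ (b, a)" if "a < d n" "b < d n" for n a b \<omega>
    using that by (simp add: De Dn_def mu_def mult.commute)
  have Dsets: "{\<omega> \<in> space M. u \<le> \<bar>Dn n a b \<omega>\<bar>} \<in> sets M" for n a b u
    unfolding Dn_def by measurable
  have tail: "P.prob {\<omega> \<in> space M. u \<le> \<bar>Dn n a b \<omega>\<bar>} \<le> 2 * exp (- real n * min (u\<^sup>2 / (4 * V n)) (u / (4 * C)))"
    if n: "n > 0" and ab: "a < d n" "b < d n" and u: "u > 0" for n a b u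
  proof -
    define g where "g = (\<lambda>x. B n a x * B n b x)"
    have gm[measurable]: "g \<in> borel_measurable borel" by (simp add: g_def)
    have ind: "P.indep_vars (\<lambda>_. borel) (\<lambda>i \<omega>. g (X i \<omega>)) {..<n}"
      using P.indep_vars_compose2[OF P.indep_vars_subset[OF A(3), of "{..<n}"], of "\<lambda>_. g" "\<lambda>_. borel"] by simp
    have distr_int: "P.expectation (\<lambda>\<omega>. f (X i \<omega>)) = P.expectation (\<lambda>\<omega>. f (X 0 \<omega>))"
      if [measurable]: "f \<in> borel_measurable borel" for f :: "real \<Rightarrow> real" and i
    proof -
      have "P.expectation (\<lambda>\<omega>. f (X i \<omega>)) = integral\<^sup>L (distr M borel (X i)) f"
        using integral_distr[of "X i" M borel f] by simp
      also have "\<dots> = integral\<^sup>L (distr M borel (X 0)) f" by (simp only: A(4)[of i])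
      also have "\<dots> = P.expectation (\<lambda>\<omega>. f (X 0 \<omega>))" using integral_distr[of "X 0" M borel f] by simp
      finally show ?thesis .
    qed
    have mean: "P.expectation (\<lambda>\<omega>. g (X i \<omega>)) = mu n a b" for i
      using distr_int[OF gm, of i] by (simp add: mu_def g_def)
    have var: "P.expectation (\<lambda>\<omega>. (g (X i \<omega>))\<^sup>2) \<le> V n" for i
    proof -
      have "P.expectation (\<lambda>\<omega>. (g (X i \<omega>))\<^sup>2) = P.expectation (\<lambda>\<omega>. (g (X 0 \<omega>))\<^sup>2)"
        by (rule distr_int) measurable
      also have "\<dots> \<le> P.expectation (\<lambda>\<omega>. C * (B n a (X 0 \<omega>))\<^sup>2)"
      proof (rule integral_mono)
        show "integrable M (\<lambda>\<omega>. (g (X 0 \<omega>))\<^sup>2)"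
        proof (rule P.integrable_const_bound[where B="C\<^sup>2"])
          show "AE x in M. norm ((g (X 0 x))\<^sup>2) \<le> C\<^sup>2"
          proof (intro AE_I2)
            fix x
            have "\<bar>g (X 0 x)\<bar> \<le> \<bar>C\<bar>" using Yb Cp by (simp add: g_def)
            thus "norm ((g (X 0 x))\<^sup>2) \<le> C\<^sup>2" by (simp add: abs_le_square_iff)
          qed
        qed measurable
        show "integrable M (\<lambda>\<omega>. C * (B n a (X 0 \<omega>))\<^sup>2)"
        proof (rule P.integrable_const_bound[where B="C * (2 ^ l)\<^sup>2"])
          show "AE x in M. norm (C * (B n a (X 0 x))\<^sup>2) \<le> C * (2 ^ l)\<^sup>2"
          proof (intro AE_I2)
            fix x
            have "(B n a (X 0 x))\<^sup>2 \<le> (2 ^ l)\<^sup>2" using Bb[of n a "X 0 x"] by (simp add: abs_le_square_iff[symmetric])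
            thus "norm (C * (B n a (X 0 x))\<^sup>2) \<le> C * (2 ^ l)\<^sup>2" using Cp by (simp add: abs_mult)
          qed
        qed measurable
        show "(g (X 0 \<omega>))\<^sup>2 \<le> C * (B n a (X 0 \<omega>))\<^sup>2" for \<omega> by (simp add: g_def Y2b)
      qed
      also have "\<dots> = C * P.expectation (\<lambda>\<omega>. (B n a (X 0 \<omega>))\<^sup>2)" by simp
      also have "\<dots> \<le> C * (b3 / real (d n))"
        using A(14)[of a n] ab Cp by (intro mult_left_mono) (auto simp: B_def d_def)
      finally show ?thesis by (simp add: V_def)
    qed
    have Vp: "V n > 0" using Cp A(12) dpos[of n] by (simp add: V_def)
    have "P.prob {\<omega> \<in> space M. \<bar>(1 / real n) * (\<Sum>i<n. g (X i \<omega>)) - mu n a b\<bar> \<ge> u}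
          \<le> 2 * exp (- real n * min (u\<^sup>2 / (4 * V n)) (u / (4 * C)))"
      by (rule P.bernstein_abs[OF ind n _ mean var Cp Vp u]) (simp add: g_def Yb)
    thus ?thesis by (simp add: Dn_def g_def)
  qed
  have maxent: "\<exists>a<d n. \<exists>b<d n. u \<le> \<bar>Dn n a b \<omega>\<bar>"
    if "\<not> (\<exists>m. m < u \<and> (\<forall>a<d n. \<forall>b<d n. \<bar>Dn n a b \<omega>\<bar> \<le> m))" for n \<omega> u
  proof (rule ccontr)
    assume nex: "\<not> (\<exists>a<d n. \<exists>b<d n. u \<le> \<bar>Dn n a b \<omega>\<bar>)"
    let ?S = "(\<lambda>p. \<bar>Dn n (fst p) (snd p) \<omega>\<bar>) ` ({..<d n} \<times> {..<d n})"
    have fin: "finite ?S" by simp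
    have ne: "?S \<noteq> {}" using dpos[of n] by auto
    have "Max ?S \<in> ?S" using Max_in[OF fin ne] .
    hence "Max ?S < u" using nex by (auto simp: not_le)
    moreover have "\<forall>a<d n. \<forall>b<d n. \<bar>Dn n a b \<omega>\<bar> \<le> Max ?S"
    proof (intro allI impI)
      fix a b assume ab: "a < d n" "b < d n"
      show "\<bar>Dn n a b \<omega>\<bar> \<le> Max ?S"
        by (rule Max_ge[OF fin], rule image_eqI[of _ _ "(a, b)"]) (use ab in auto)
    qed
    ultimately show False using that by blast
  qed
  have part1: "\<exists>c4>0. \<forall>\<^sub>F n in sequentially.
            P.prob {\<omega> \<in> space M. lam_max (PM n \<omega>) \<ge> (b2 + 1) / real (k n + l)}
              \<le> 2 * real (k n + l) ^ 2 * exp (- c4 * real n / real (k n + l) ^ 3)"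
  proof (intro exI conjI)
    define c4 where "c4 = 1 / (4 * C * (b3 + 1))"
    show "c4 > 0" using Cp A(12) by (simp add: c4_def)
    show "\<forall>\<^sub>F n in sequentially.
            P.prob {\<omega> \<in> space M. lam_max (PM n \<omega>) \<ge> (b2 + 1) / real (k n + l)}
              \<le> 2 * real (k n + l) ^ 2 * exp (- c4 * real n / real (k n + l) ^ 3)"
    proof (rule eventually_sequentiallyI[of 1])
      fix n :: nat assume n1: "n \<ge> 1"
      hence n: "n > 0" by simp
      define u where "u = 1 / real (d n) ^ 2"
      have up: "u > 0" using dpos[of n] by (simp add: u_def)
      have sub: "{\<omega> \<in> space M. lam_max (PM n \<omega>) \<ge> (b2 + 1) / real (k n + l)}
          \<subseteq> (\<Union>a<d n. \<Union>b<d n. {\<omega> \<in> space M. u \<le> \<bar>Dn n a b \<omega>\<bar>})"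
      proof
        fix \<omega> assume "\<omega> \<in> {\<omega> \<in> space M. lam_max (PM n \<omega>) \<ge> (b2 + 1) / real (k n + l)}"
        hence \<omega>: "\<omega> \<in> space M" and ge: "lam_max (PM n \<omega>) \<ge> (b2 + 1) / real (d n)" by (auto simp: d_def)
        have "\<not> (\<exists>m. m < u \<and> (\<forall>a<d n. \<forall>b<d n. \<bar>Dn n a b \<omega>\<bar> \<le> m))"
        proof
          assume "\<exists>m. m < u \<and> (\<forall>a<d n. \<forall>b<d n. \<bar>Dn n a b \<omega>\<bar> \<le> m)"
          then obtain m where m: "m < u" "\<forall>a<d n. \<forall>b<d n. \<bar>Dn n a b \<omega>\<bar> \<le> m" by blast
          have "lam_max (PM n \<omega>) \<le> b2 / real (d n) + real (d n) * m"
          proof (rule LA_part1[OF PMc EMc dpos])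
            show "PM n \<omega> $$ (i, j) = PM n \<omega> $$ (j, i)" if "i < d n" "j < d n" for i j using symP that by blast
            show "EM n $$ (i, j) = EM n $$ (j, i)" if "i < d n" "j < d n" for i j using symE that by blast
            show "lam_max (EM n) \<le> b2 / real (d n)" using A(13) by (simp add: d_def)
            show "\<bar>PM n \<omega> $$ (i, j) - EM n $$ (i, j)\<bar> \<le> m" if "i < d n" "j < d n" for i j
              using m(2) that De[OF that, of \<omega>] EMc[of n] PMc[of n \<omega>] by auto
          qed
          also have "\<dots> < b2 / real (d n) + real (d n) * u"
            using m(1) dpos[of n] by simp
          also have "\<dots> = (b2 + 1) / real (d n)"
            using dpos[of n] by (simp add: u_def field_simps power2_eq_square)
          finally show False using ge by simp
        qed
        from maxent[OF this] \<omega> show "\<omega> \<in> (\<Union>a<d n. \<Union>b<d n. {\<omega> \<in> space M. u \<le> \<bar>Dn n a b \<omega>\<bar>})" by auto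
      qed
      have "P.prob {\<omega> \<in> space M. lam_max (PM n \<omega>) \<ge> (b2 + 1) / real (k n + l)}
         \<le> real (d n) ^ 2 * (2 * exp (- real n * min (u\<^sup>2 / (4 * V n)) (u / (4 * C))))"
        by (rule union_bound_pairs[OF _ Dsets sub tail[OF n _ _ up]]) (simp_all add: P.finite_measure_axioms)
      also have "\<dots> \<le> real (d n) ^ 2 * (2 * exp (- c4 * real n / real (d n) ^ 3))"
      proof -
        have "c4 / real (d n) ^ 3 \<le> min (u\<^sup>2 / (4 * V n)) (u / (4 * C))"
          using arith1[OF dge[of n] Cp A(12)] by (simp add: c4_def u_def V_def mult.assoc)
        hence "real n * (c4 / real (d n) ^ 3) \<le> real n * min (u\<^sup>2 / (4 * V n)) (u / (4 * C))"
          by (intro mult_left_mono) auto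
        hence "- (real n * min (u\<^sup>2 / (4 * V n)) (u / (4 * C))) \<le> - c4 * real n / real (d n) ^ 3"
          by (simp add: field_simps)
        hence "exp (- (real n * min (u\<^sup>2 / (4 * V n)) (u / (4 * C)))) \<le> exp (- c4 * real n / real (d n) ^ 3)"
          by simp
        thus ?thesis by (intro mult_left_mono) auto
      qed
      finally show "P.prob {\<omega> \<in> space M. lam_max (PM n \<omega>) \<ge> (b2 + 1) / real (k n + l)}
              \<le> 2 * real (k n + l) ^ 2 * exp (- c4 * real n / real (k n + l) ^ 3)"
        by (simp add: d_def mult_ac)
    qed
  qed
  have part2: "\<forall>c5>0. \<exists>c6>0. \<forall>\<^sub>F n in sequentially.
            P.prob {\<omega> \<in> space M.
                max \<bar>lam_max (PM n \<omega> - EM n)\<bar> \<bar>lam_min (PM n \<omega> - EM n)\<bar> \<ge> c5 / real (k n + l) * real n powr (- \<tau>)}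
              \<le> 2 * real (k n + l) ^ 2 * exp (- c6 / real (k n + l) ^ 3 * real n powr (1 - 2 * \<tau>))"
  proof (intro allI impI)
    fix c5 :: real assume c5: "c5 > 0"
    define c6 where "c6 = min (c5\<^sup>2) c5 / (4 * C * (b3 + 1))"
    show "\<exists>c6>0. \<forall>\<^sub>F n in sequentially.
            P.prob {\<omega> \<in> space M.
                max \<bar>lam_max (PM n \<omega> - EM n)\<bar> \<bar>lam_min (PM n \<omega> - EM n)\<bar> \<ge> c5 / real (k n + l) * real n powr (- \<tau>)}
              \<le> 2 * real (k n + l) ^ 2 * exp (- c6 / real (k n + l) ^ 3 * real n powr (1 - 2 * \<tau>))"
    proof (intro exI conjI)
      show "c6 > 0" using Cp A(12) c5 by (simp add: c6_def)
      show "\<forall>\<^sub>F n in sequentially.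
            P.prob {\<omega> \<in> space M.
                max \<bar>lam_max (PM n \<omega> - EM n)\<bar> \<bar>lam_min (PM n \<omega> - EM n)\<bar> \<ge> c5 / real (k n + l) * real n powr (- \<tau>)}
              \<le> 2 * real (k n + l) ^ 2 * exp (- c6 / real (k n + l) ^ 3 * real n powr (1 - 2 * \<tau>))"
      proof (rule eventually_sequentiallyI[of 1])
        fix n :: nat assume n1: "n \<ge> 1"
        hence n: "n > 0" by simp
        define thr where "thr = c5 / real (d n) * real n powr (- \<tau>)"
        define u where "u = c5 / real (d n) * real n powr (- \<tau>) / real (d n)"
        have up: "u > 0" using dpos[of n] c5 n by (simp add: u_def)
        have sub: "{\<omega> \<in> space M.
                max \<bar>lam_max (PM n \<omega> - EM n)\<bar> \<bar>lam_min (PM n \<omega> - EM n)\<bar> \<ge> c5 / real (k n + l) * real n powr (- \<tau>)}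
          \<subseteq> (\<Union>a<d n. \<Union>b<d n. {\<omega> \<in> space M. u \<le> \<bar>Dn n a b \<omega>\<bar>})"
        proof
          fix \<omega> assume "\<omega> \<in> {\<omega> \<in> space M.
                max \<bar>lam_max (PM n \<omega> - EM n)\<bar> \<bar>lam_min (PM n \<omega> - EM n)\<bar> \<ge> c5 / real (k n + l) * real n powr (- \<tau>)}"
          hence \<omega>: "\<omega> \<in> space M" and ge: "max \<bar>lam_max (PM n \<omega> - EM n)\<bar> \<bar>lam_min (PM n \<omega> - EM n)\<bar> \<ge> thr"
            by (auto simp: d_def thr_def)
          have "\<not> (\<exists>m. m < u \<and> (\<forall>a<d n. \<forall>b<d n. \<bar>Dn n a b \<omega>\<bar> \<le> m))"
          proof
            assume "\<exists>m. m < u \<and> (\<forall>a<d n. \<forall>b<d n. \<bar>Dn n a b \<omega>\<bar> \<le> m)"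
            then obtain m where m: "m < u" "\<forall>a<d n. \<forall>b<d n. \<bar>Dn n a b \<omega>\<bar> \<le> m" by blast
            have mb: "\<bar>(PM n \<omega> - EM n) $$ (i, j)\<bar> \<le> m" if "i < d n" "j < d n" for i j
              using m(2) that De[OF that, of \<omega>] by auto
            have l1: "\<bar>lam_max (PM n \<omega> - EM n)\<bar> \<le> real (d n) * m"
              by (rule LA_part2(1)[OF Dc dpos symD mb])
            have l2: "\<bar>lam_min (PM n \<omega> - EM n)\<bar> \<le> real (d n) * m"
              by (rule LA_part2(2)[OF Dc dpos symD mb])
            have "real (d n) * m < real (d n) * u" using m(1) dpos[of n] by simp
            also have "\<dots> = thr" using dpos[of n] by (simp add: u_def thr_def)
            finally show False using l1 l2 ge by linarith
          qed
          from maxent[OF this] \<omega> show "\<omega> \<in> (\<Union>a<d n. \<Union>b<d n. {\<omega> \<in> space M. u \<le> \<bar>Dn n a b \<omega>\<bar>})" by auto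
        qed
        have "P.prob {\<omega> \<in> space M.
                max \<bar>lam_max (PM n \<omega> - EM n)\<bar> \<bar>lam_min (PM n \<omega> - EM n)\<bar> \<ge> c5 / real (k n + l) * real n powr (- \<tau>)}
           \<le> real (d n) ^ 2 * (2 * exp (- real n * min (u\<^sup>2 / (4 * V n)) (u / (4 * C))))"
          by (rule union_bound_pairs[OF _ Dsets sub tail[OF n _ _ up]]) (simp_all add: P.finite_measure_axioms)
        also have "\<dots> \<le> real (d n) ^ 2 * (2 * exp (- c6 / real (d n) ^ 3 * real n powr (1 - 2 * \<tau>)))"
        proof -
          have "c6 / real (d n) ^ 3 * real n powr (1 - 2 * \<tau>) \<le> real n * min (u\<^sup>2 / (4 * V n)) (u / (4 * C))"
            using arith2[OF dge[of n] Cp A(12) c5 A(10), of "real n"] n1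
            by (simp add: c6_def u_def V_def mult.assoc)
          hence "exp (- real n * min (u\<^sup>2 / (4 * V n)) (u / (4 * C))) \<le> exp (- c6 / real (d n) ^ 3 * real n powr (1 - 2 * \<tau>))"
            by simp
          thus ?thesis by (intro mult_left_mono) auto
        qed
        finally show "P.prob {\<omega> \<in> space M.
                max \<bar>lam_max (PM n \<omega> - EM n)\<bar> \<bar>lam_min (PM n \<omega> - EM n)\<bar> \<ge> c5 / real (k n + l) * real n powr (- \<tau>)}
              \<le> 2 * real (k n + l) ^ 2 * exp (- c6 / real (k n + l) ^ 3 * real n powr (1 - 2 * \<tau>))"
          by (simp add: d_def mult_ac)
      qed
    qed
  qed
  show ?thesis using part1 part2 by blast
qed

end
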